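(* Let $X\subset Z$ be a compact $G$-invariant subset, $\eta\colon X\to\mathbb R$, $\eta(x)=\|\mu_{\mathfrak p}(x)\|^2$, and let $x\in X$ be a point where $\eta$ attains its maximum on $X$. Put $\beta=\mu_{\mathfrak p}(x)$. Then $\beta$ is an extreme point of the convex hull of $\mu_{\mathfrak p}(X)$, and $x\in X^\beta_{\max}$.
   Context: $U$ compact Lie group, $U^{\mathbb C}=U\exp(i\mathfrak u)$ its complexification with Cartan decomposition; a $U$-invariant inner product $\langle\cdot,\cdot\rangle$ (norm $\|\cdot\|$) on $\mathfrak u$, transported to $i\mathfrak u$, identifies $\mathfrak u^*$ with $i\mathfrak u$. $Z$ Kähler manifold with holomorphic $U^{\mathbb C}$-action, $U$-invariant Kähler form, $U$-equivariant momentum map $\mu\colon Z\to i\mathfrak u$ with $\operatorname{grad}\mu^\alpha=\alpha_Z$ ($\mu^\alpha=\langle\mu,\alpha\rangle$, Kähler metric, $\alpha_Z$ vector field of $t\mapsto\exp(t\alpha)$). $G\subset U^{\mathbb C}$ closed, $K=G\cap U$, $\mathfrak p=\mathfrak g\cap i\mathfrak u$, with $K\times\mathfrak p\to G$, $(k,\alpha)\mapsto k\exp\alpha$ a diffeomorphism. $\mu_{\mathfrak p}=\pi_{\mathfrak p}\circ\mu$ (orthogonal projection), $\mu^\beta_{\mathfrak p}=\langle\mu_{\mathfrak p},\beta\rangle$, and $X^\beta_{\max}=\{y\in X:\mu^\beta_{\mathfrak p}(y)=\max_X\mu^\beta_{\mathfrak p}\}$. *)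

theory Defs
  imports "HOL-Analysis.Analysis"
begin

definition orth_proj :: "'a::euclidean_space set \<Rightarrow> 'a \<Rightarrow> 'a" where
  "orth_proj P v = (THE w. w \<in> P \<and> (\<forall>u\<in>P. inner (v - w) u = 0))"

definition mu_p :: "'a::euclidean_space set \<Rightarrow> ('z \<Rightarrow> 'a) \<Rightarrow> 'z \<Rightarrow> 'a" where
  "mu_p P mu z = orth_proj P (mu z)"

definition mu_p_beta :: "'a::euclidean_space set \<Rightarrow> ('z \<Rightarrow> 'a) \<Rightarrow> 'a \<Rightarrow> 'z \<Rightarrow> real" where
  "mu_p_beta P mu \<beta> z = inner (mu_p P mu z) \<beta>"

definition X_max :: "'a::euclidean_space set \<Rightarrow> ('z \<Rightarrow> 'a) \<Rightarrow> 'z set \<Rightarrow> 'a \<Rightarrow> 'z set" where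
  "X_max P mu X \<beta> = {y \<in> X. mu_p_beta P mu \<beta> y = (SUP z\<in>X. mu_p_beta P mu \<beta> z)}"

end

theory Submission
  imports Defs
begin

lemma norm_max_extreme:
  fixes C :: "'a::real_inner set"
  assumes bC: "b \<in> C" and mx: "\<forall>c\<in>C. norm c \<le> norm b"
  shows "b extreme_point_of C"
  unfolding extreme_point_of_def
proof (intro conjI ballI bC)
  fix p q assume p: "p \<in> C" and q: "q \<in> C"
  show "b \<notin> open_segment p q"
  proof
    assume "b \<in> open_segment p q"
    then obtain u where u: "0 < u" "u < 1" and pq: "p \<noteq> q" and bu: "b = (1 - u) *\<^sub>R p + u *\<^sub>R q"
      by (auto simp: in_segment)
    have ip: "inner p b \<le> inner b b"
      if "norm p \<le> norm b" for p
    proof -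
      have "inner p b \<le> norm p * norm b" by (rule norm_cauchy_schwarz)
      also have "\<dots> \<le> norm b * norm b" using that by (simp add: mult_right_mono)
      finally show ?thesis by (simp add: norm_eq_sqrt_inner)
    qed
    have ipb: "inner p b \<le> inner b b" using ip mx p by blast
    have iqb: "inner q b \<le> inner b b" using ip mx q by blast
    have "inner b b = (1 - u) * inner p b + u * inner q b"
      by (subst (1) bu) (simp add: inner_add_left)
    then have z: "(1 - u) * (inner b b - inner p b) + u * (inner b b - inner q b) = 0"
      by (simp add: algebra_simps)
    have n1: "(1 - u) * (inner b b - inner p b) \<ge> 0" using u ipb by simp
    have n2: "u * (inner b b - inner q b) \<ge> 0" using u iqb by simp
    have "(1 - u) * (inner b b - inner p b) = 0" using z n1 n2 by linarith
    then have e1: "inner p b = inner b b" using u by simp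
    have "u * (inner b b - inner q b) = 0" using z n1 n2 by linarith
    then have e2: "inner q b = inner b b" using u by simp
    have sq: "inner (c - b) (c - b) = inner c c - 2 * inner c b + inner b b" for c
      by (simp add: inner_diff_left inner_diff_right inner_commute)
    have "norm p \<le> norm b" "norm q \<le> norm b" using mx p q by auto
    then have "inner p p \<le> inner b b" "inner q q \<le> inner b b"
      by (simp_all add: norm_le)
    then have "inner (p - b) (p - b) \<le> 0" "inner (q - b) (q - b) \<le> 0"
      using sq e1 e2 by simp_all
    then have "p = b" "q = b" by (simp_all add: inner_gt_zero_iff[symmetric] not_less[symmetric])
    with pq show False by simp
  qed
qed

theorem mainTheorem6:
  fixes mu :: "'z::topological_space \<Rightarrow> 'u::euclidean_space"
    and P :: "'u set"
    and Gs :: "'g set" and act :: "'g \<Rightarrow> 'z \<Rightarrow> 'z"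
    and X :: "'z set" and x :: 'z
  assumes mu_cont: "continuous_on UNIV mu"
    and P_sub: "subspace P"
    and X_compact: "compact X"
    and X_inv: "\<forall>g\<in>Gs. \<forall>y\<in>X. act g y \<in> X"
    and x_in: "x \<in> X"
    and x_max: "\<forall>y\<in>X. (norm (mu_p P mu y))\<^sup>2 \<le> (norm (mu_p P mu x))\<^sup>2"
  shows "mu_p P mu x extreme_point_of (convex hull (mu_p P mu ` X))
     \<and> x \<in> X_max P mu X (mu_p P mu x)"
proof -
  define f where "f = mu_p P mu"
  define b where "b = f x"
  have nm: "\<forall>y\<in>X. norm (f y) \<le> norm b"
    using x_max unfolding f_def b_def by (simp add: power_mono_iff)
  have sub: "convex hull (f ` X) \<subseteq> cball 0 (norm b)"
    by (rule hull_minimal) (use nm in auto)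
  have ext: "b extreme_point_of (convex hull (f ` X))"
  proof (rule norm_max_extreme)
    show "b \<in> convex hull (f ` X)" using x_in b_def by (simp add: hull_inc)
    show "\<forall>c\<in>convex hull (f ` X). norm c \<le> norm b" using sub by auto
  qed
  have le: "inner (f y) b \<le> inner b b" if "y \<in> X" for y
  proof -
    have "inner (f y) b \<le> norm (f y) * norm b" by (rule norm_cauchy_schwarz)
    also have "\<dots> \<le> norm b * norm b" using nm that by (simp add: mult_right_mono)
    finally show ?thesis by (simp add: norm_eq_sqrt_inner)
  qed
  have "(SUP z\<in>X. inner (f z) b) = inner b b"
  proof (rule antisym)
    show "(SUP z\<in>X. inner (f z) b) \<le> inner b b"
      using x_in le by (intro cSUP_least) auto
    show "inner b b \<le> (SUP z\<in>X. inner (f z) b)"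
    proof (rule cSUP_upper2)
      show "bdd_above ((\<lambda>z. inner (f z) b) ` X)" using le unfolding bdd_above_def by auto
    qed (use x_in b_def in auto)
  qed
  then have "x \<in> X_max P mu X b"
    unfolding X_max_def mu_p_beta_def using x_in by (simp add: f_def[symmetric] b_def)
  with ext show ?thesis unfolding f_def b_def by simp
qed

end
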